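(* Let $w\in W'(d,2m;\vec 0)$. If $\Phi(\phi(w))=w$, then $\phi(w)\in\overline G_r(U,V;d)$.
   Context: $n,r,d\ge1$, $m=rn$. $U=\{u_1\prec\cdots\prec u_n\}$, $V=\{v_1\prec\cdots\prec v_n\}$. An $r$-regular bipartite multigraph on $(U,V)$ is a multiset of edges $uv$ in which every vertex has degree $r$. Edges $uv,u'v'$ are noncrossing if ($u\prec u'$ and $v\prec v'$) or ($u'\prec u$ and $v'\prec v$); a planar matching is a set of pairwise noncrossing edges; $L(G)$ is its maximum size; $G_r(U,V;d)$ is the set of $r$-regular multigraphs $G$ with $L(G)\le d$. $\overline U=U\times[r]$, $\overline V=V\times[r]$ ordered lexicographically (write $u^s$ for $(u,s)$); noncrossing pairs in $\overline U\times\overline V$ defined the same way. An $r$-configuration is a bijection between $\overline U$ and $\overline V$; a quasi configuration is a partial matching. For $G$ an $r$-regular multigraph, its associated configuration $\overline G$: for each edge $uv$ of multiplicity $t\ge1$, let $i$ be the number of edges $uv'$ (with multiplicity) with $v\prec v'$, $j$ the number of edges $u'v$ with $u\prec u'$; $\overline G$ contains $(u^{i+s},v^{j+t-s+1})$, $s=1,\dots,t$. $\overline G_r(U,V;d)=\{\overline G:G\in G_r(U,V;d)\}$. Walks $w=a_{u_1^1}\cdots a_{u_n^r}|b_{v_1^1}\cdots b_{v_n^r}$ ($a,b\in[d]$) in $\mathbb Z^d$ from the origin with steps $e_{a_{\bar u}}$ ($\bar u$ increasing) then $-e_{b_{\bar v}}$ ($\bar v$ increasing); $W'(d,2m;\vec0)$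 is the set of those ending at the origin with $a_{u^s}\ge a_{u^{s+1}}$ and $b_{v^s}\ge b_{v^{s+1}}$ for all $u\in U,v\in V$, $1\le s<r$. For an $r$-configuration $F$: $a_{\bar u}$ is the maximum size of a set of pairwise noncrossing pairs of $F$ containing the pair $(\bar u,\bar v')\in F$, all of whose pairs $(x,y)$ satisfy $x\preceq\bar u$, $y\preceq\bar v'$; $b_{\bar v}$ symmetrically; $\Phi(F)=a_{u_1^1}\cdots a_{u_n^r}|b_{v_1^1}\cdots b_{v_n^r}$. $A_k(w)=\{\bar u:a_{\bar u}=k\}$, $B_k(w)=\{\bar v:b_{\bar v}=k\}$; connecting equal-size ordered sets $A,B$ in a crossing way: pair the $i$-th smallest of $A$ with the $i$-th largest of $B$; $\phi(w)$: for each $k$, if $|A_k(w)|\ge|B_k(w)|$ connect the $|B_k(w)|$ smallest elements of $A_k(w)$ with $B_k(w)$ in a crossing way, else connect $A_k(w)$ with the $|A_k(w)|$ largest elements of $B_k(w)$ in a crossing way. *)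

theory Defs
  imports Main "HOL-Library.Product_Lexorder"
begin

text \<open>Vertices: U = V = {0..<n} with the natural order (u_1 < ... < u_n is index 0..n-1).
  Copies: \<open>(i, s)\<close> with \<open>i < n\<close>, \<open>1 \<le> s \<le> r\<close> stands for u_{i+1}^s; pairs are ordered
  lexicographically (Product_Lexorder).\<close>

definition Ubar :: "nat \<Rightarrow> nat \<Rightarrow> (nat \<times> nat) set" where
  "Ubar n r = {0..<n} \<times> {1..r}"

definition noncross :: "('a::ord \<times> 'b::ord) \<Rightarrow> ('a \<times> 'b) \<Rightarrow> bool" where
  "noncross e e' \<longleftrightarrow> (fst e < fst e' \<and> snd e < snd e') \<or> (fst e' < fst e \<and> snd e' < snd e)"

text \<open>A bipartite multigraph on (U,V) is given by its multiplicity function G i j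
  (number of edges u_i v_j), vanishing outside {0..<n} x {0..<n}.\<close>

definition is_multigraph :: "nat \<Rightarrow> (nat \<Rightarrow> nat \<Rightarrow> nat) \<Rightarrow> bool" where
  "is_multigraph n G \<longleftrightarrow> (\<forall>i j. G i j \<noteq> 0 \<longrightarrow> i < n \<and> j < n)"

definition regular :: "nat \<Rightarrow> nat \<Rightarrow> (nat \<Rightarrow> nat \<Rightarrow> nat) \<Rightarrow> bool" where
  "regular n r G \<longleftrightarrow> (\<forall>i<n. (\<Sum>j<n. G i j) = r) \<and> (\<forall>j<n. (\<Sum>i<n. G i j) = r)"

definition planar_matching :: "nat \<Rightarrow> (nat \<Rightarrow> nat \<Rightarrow> nat) \<Rightarrow> (nat \<times> nat) set \<Rightarrow> bool" where
  "planar_matching n G M \<longleftrightarrow>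
     M \<subseteq> {(i, j). i < n \<and> j < n \<and> G i j > 0} \<and> pairwise noncross M"

definition Lmax :: "nat \<Rightarrow> (nat \<Rightarrow> nat \<Rightarrow> nat) \<Rightarrow> nat" where
  "Lmax n G = Max {card M | M. planar_matching n G M}"

definition Gr :: "nat \<Rightarrow> nat \<Rightarrow> nat \<Rightarrow> (nat \<Rightarrow> nat \<Rightarrow> nat) set" where
  "Gr n r d = {G. is_multigraph n G \<and> regular n r G \<and> Lmax n G \<le> d}"

text \<open>Associated configuration: for an edge u v of multiplicity t \<ge> 1,
  i = #edges u v' with v < v', j = #edges u' v with u < u'; pairs (u^{i+s}, v^{j+t-s+1}).\<close>
definition conf_of :: "nat \<Rightarrow> (nat \<Rightarrow> nat \<Rightarrow> nat) \<Rightarrow> ((nat \<times> nat) \<times> (nat \<times> nat)) set" where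
  "conf_of n G =
     {((u, (\<Sum>v'\<in>{v<..<n}. G u v') + s), (v, (\<Sum>u'\<in>{u<..<n}. G u' v) + G u v - s + 1)) | u v s.
        u < n \<and> v < n \<and> 1 \<le> G u v \<and> 1 \<le> s \<and> s \<le> G u v}"

definition Gbar_set :: "nat \<Rightarrow> nat \<Rightarrow> nat \<Rightarrow> ((nat \<times> nat) \<times> (nat \<times> nat)) set set" where
  "Gbar_set n r d = conf_of n ` Gr n r d"

text \<open>A walk is a pair (a, b) of labellings of Ubar resp. Vbar by letters in [d].
  It ends at the origin iff for each k the number of +e_k steps equals the number of -e_k steps.\<close>
definition Wp :: "nat \<Rightarrow> nat \<Rightarrow> nat \<Rightarrow> ((nat \<times> nat \<Rightarrow> nat) \<times> (nat \<times> nat \<Rightarrow> nat)) set" where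
  "Wp n r d = {(a, b).
     (\<forall>x\<in>Ubar n r. a x \<in> {1..d}) \<and> (\<forall>y\<in>Ubar n r. b y \<in> {1..d}) \<and>
     (\<forall>k\<in>{1..d}. card {x\<in>Ubar n r. a x = k} = card {y\<in>Ubar n r. b y = k}) \<and>
     (\<forall>i<n. \<forall>s. 1 \<le> s \<and> s < r \<longrightarrow> a (i, s) \<ge> a (i, s + 1)) \<and>
     (\<forall>i<n. \<forall>s. 1 \<le> s \<and> s < r \<longrightarrow> b (i, s) \<ge> b (i, s + 1))}"

definition cross_connect :: "'a::linorder set \<Rightarrow> 'b::linorder set \<Rightarrow> ('a \<times> 'b) set" where
  "cross_connect A B = {(x, y). x \<in> A \<and> y \<in> B \<and>
     card {x'\<in>A. x' < x} = card {y'\<in>B. y < y'}}"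

definition smallest :: "nat \<Rightarrow> 'a::linorder set \<Rightarrow> 'a set" where
  "smallest c A = {x\<in>A. card {x'\<in>A. x' < x} < c}"

definition largest :: "nat \<Rightarrow> 'a::linorder set \<Rightarrow> 'a set" where
  "largest c B = {y\<in>B. card {y'\<in>B. y < y'} < c}"

definition phi :: "nat \<Rightarrow> nat \<Rightarrow> nat \<Rightarrow> (nat \<times> nat \<Rightarrow> nat) \<Rightarrow> (nat \<times> nat \<Rightarrow> nat)
                   \<Rightarrow> ((nat \<times> nat) \<times> (nat \<times> nat)) set" where
  "phi n r d a b = (\<Union>k\<in>{1..d}.
     (let A = {x\<in>Ubar n r. a x = k}; B = {y\<in>Ubar n r. b y = k} in
      if card A \<ge> card B then cross_connect (smallest (card B) A) B
      else cross_connect A (largest (card A) B)))"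

definition Phi_a :: "((nat \<times> nat) \<times> (nat \<times> nat)) set \<Rightarrow> nat \<times> nat \<Rightarrow> nat" where
  "Phi_a F x = Max {card S | S v'. (x, v') \<in> F \<and> S \<subseteq> F \<and> (x, v') \<in> S \<and> pairwise noncross S \<and>
                     (\<forall>(p, q)\<in>S. p \<le> x \<and> q \<le> v')}"

definition Phi_b :: "((nat \<times> nat) \<times> (nat \<times> nat)) set \<Rightarrow> nat \<times> nat \<Rightarrow> nat" where
  "Phi_b F y = Max {card S | S u'. (u', y) \<in> F \<and> S \<subseteq> F \<and> (u', y) \<in> S \<and> pairwise noncross S \<and>
                     (\<forall>(p, q)\<in>S. p \<le> u' \<and> q \<le> y)}"

end

theory Submission
  imports Defs
begin


lemma rank_bij:
  fixes A :: "'a::linorder set"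
  assumes "finite A"
  shows "bij_betw (\<lambda>x. card {x'\<in>A. x' < x}) A {0..<card A}"
proof -
  have lt: "card {x''\<in>A. x'' < x} < card {x''\<in>A. x'' < x'}" if "x \<in> A" "x < x'" for x x'
    by (rule psubset_card_mono) (use assms that in auto)
  have inj: "inj_on (\<lambda>x. card {x'\<in>A. x' < x}) A"
  proof (rule inj_onI)
    fix x y assume "x \<in> A" "y \<in> A" "card {x'\<in>A. x' < x} = card {x'\<in>A. x' < y}"
    then show "x = y" using lt[of x y] lt[of y x] by (metis less_irrefl linorder_neqE)
  qed
  have sub: "(\<lambda>x. card {x'\<in>A. x' < x}) ` A \<subseteq> {0..<card A}"
  proof
    fix z assume "z \<in> (\<lambda>x. card {x'\<in>A. x' < x}) ` A"
    then obtain x where x: "x \<in> A" "z = card {x'\<in>A. x' < x}" by auto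
    have "card {x'\<in>A. x' < x} < card A"
      by (rule psubset_card_mono) (use assms x in auto)
    then show "z \<in> {0..<card A}" using x by auto
  qed
  have "(\<lambda>x. card {x'\<in>A. x' < x}) ` A = {0..<card A}"
    by (rule card_subset_eq) (use sub inj card_image in auto)
  with inj show ?thesis unfolding bij_betw_def by auto
qed

lemma rank_bij':
  fixes B :: "'a::linorder set"
  assumes "finite B"
  shows "bij_betw (\<lambda>y. card {y'\<in>B. y < y'}) B {0..<card B}"
proof -
  have lt: "card {y''\<in>B. x' < y''} < card {y''\<in>B. x < y''}" if "x' \<in> B" "x < x'" for x x'
    by (rule psubset_card_mono) (use assms that in auto)
  have inj: "inj_on (\<lambda>y. card {y'\<in>B. y < y'}) B"
  proof (rule inj_onI)
    fix x y assume "x \<in> B" "y \<in> B" "card {y'\<in>B. x < y'} = card {y'\<in>B. y < y'}"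
    then show "x = y" using lt[of x y] lt[of y x] by (metis less_irrefl linorder_neqE)
  qed
  have sub: "(\<lambda>y. card {y'\<in>B. y < y'}) ` B \<subseteq> {0..<card B}"
  proof
    fix z assume "z \<in> (\<lambda>y. card {y'\<in>B. y < y'}) ` B"
    then obtain x where x: "x \<in> B" "z = card {y'\<in>B. x < y'}" by auto
    have "card {y'\<in>B. x < y'} < card B"
      by (rule psubset_card_mono) (use assms x in auto)
    then show "z \<in> {0..<card B}" using x by auto
  qed
  have "(\<lambda>y. card {y'\<in>B. y < y'}) ` B = {0..<card B}"
    by (rule card_subset_eq) (use sub inj card_image in auto)
  with inj show ?thesis unfolding bij_betw_def by auto
qed

lemma rank_lt:
  fixes A :: "'a::linorder set"
  assumes "finite A" "x \<in> A" "x < x'"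
  shows "card {x''\<in>A. x'' < x} < card {x''\<in>A. x'' < x'}"
  by (rule psubset_card_mono) (use assms in auto)

lemma rank_lt':
  fixes B :: "'a::linorder set"
  assumes "finite B" "x' \<in> B" "x < x'"
  shows "card {y''\<in>B. x' < y''} < card {y''\<in>B. x < y''}"
  by (rule psubset_card_mono) (use assms in auto)

lemma card_sum_fibres:
  assumes "finite S" "finite T"
  shows "card {q\<in>S. f q \<in> T} = (\<Sum>t\<in>T. card {q\<in>S. f q = t})"
  using assms(2)
proof (induction T rule: finite_induct)
  case empty then show ?case by simp
next
  case (insert t T)
  have "{q\<in>S. f q \<in> insert t T} = {q\<in>S. f q = t} \<union> {q\<in>S. f q \<in> T}" by auto
  moreover have "card ({q\<in>S. f q = t} \<union> {q\<in>S. f q \<in> T}) = card {q\<in>S. f q = t} + card {q\<in>S. f q \<in> T}"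
    by (rule card_Un_disjoint) (use assms insert in auto)
  ultimately show ?case using insert by simp
qed



locale cfg =
  fixes n r d :: nat and a b :: "nat \<times> nat \<Rightarrow> nat" and F :: "((nat \<times> nat) \<times> (nat \<times> nat)) set"
  assumes sub: "F \<subseteq> Ubar n r \<times> Ubar n r"
    and func: "\<And>x y y'. (x, y) \<in> F \<Longrightarrow> (x, y') \<in> F \<Longrightarrow> y = y'"
    and injF: "\<And>x x' y. (x, y) \<in> F \<Longrightarrow> (x', y) \<in> F \<Longrightarrow> x = x'"
    and tot1: "\<And>x. x \<in> Ubar n r \<Longrightarrow> \<exists>y. (x, y) \<in> F"
    and tot2: "\<And>y. y \<in> Ubar n r \<Longrightarrow> \<exists>x. (x, y) \<in> F"
    and lab: "\<And>x y. (x, y) \<in> F \<Longrightarrow> a x = b y"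
    and monoa: "\<And>i s s'. i < n \<Longrightarrow> 1 \<le> s \<Longrightarrow> s \<le> s' \<Longrightarrow> s' \<le> r \<Longrightarrow> a (i, s') \<le> a (i, s)"
    and monob: "\<And>i s s'. i < n \<Longrightarrow> 1 \<le> s \<Longrightarrow> s \<le> s' \<Longrightarrow> s' \<le> r \<Longrightarrow> b (i, s') \<le> b (i, s)"
    and phia: "\<And>x. x \<in> Ubar n r \<Longrightarrow> Phi_a F x = a x"
    and arange: "\<And>x. x \<in> Ubar n r \<Longrightarrow> a x \<le> d"
begin

lemma finU: "finite (Ubar n r)" unfolding Ubar_def by auto

lemma finF: "finite F" using sub finU by (meson finite_SigmaI rev_finite_subset)

lemma inU: "(x, y) \<in> F \<Longrightarrow> x \<in> Ubar n r \<and> y \<in> Ubar n r" using sub by auto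

lemma phi_fin: "finite {card S | S v'. (x, v') \<in> F \<and> S \<subseteq> F \<and> (x, v') \<in> S \<and> pairwise noncross S \<and>
                     (\<forall>(p, q)\<in>S. p \<le> x \<and> q \<le> v')}"
  by (rule finite_subset[of _ "{..card F}"]) (auto intro: card_mono finF)

lemma phi_ge:
  assumes "(x, y) \<in> F" "S \<subseteq> F" "(x, y) \<in> S" "pairwise noncross S" "\<forall>(p, q)\<in>S. p \<le> x \<and> q \<le> y"
  shows "card S \<le> a x"
proof -
  have "card S \<le> Phi_a F x" unfolding Phi_a_def
  proof (rule Max_ge[OF phi_fin])
    show "card S \<in> {card S | S v'. (x, v') \<in> F \<and> S \<subseteq> F \<and> (x, v') \<in> S \<and> pairwise noncross S \<and>
                     (\<forall>(p, q)\<in>S. p \<le> x \<and> q \<le> v')}"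
      apply (rule CollectI, rule exI[of _ S], rule exI[of _ y])
      using assms by simp
  qed
  then show ?thesis using phia inU assms(1) by auto
qed

lemma phi_ex:
  assumes "(x, y) \<in> F"
  shows "\<exists>S. S \<subseteq> F \<and> (x, y) \<in> S \<and> pairwise noncross S \<and> (\<forall>(p, q)\<in>S. p \<le> x \<and> q \<le> y) \<and> card S = a x"
proof -
  let ?M = "{card S | S v'. (x, v') \<in> F \<and> S \<subseteq> F \<and> (x, v') \<in> S \<and> pairwise noncross S \<and>
                     (\<forall>(p, q)\<in>S. p \<le> x \<and> q \<le> v')}"
  have ne: "?M \<noteq> {}"
  proof -
    have "card {(x,y)} \<in> ?M"
      using assms by (intro CollectI exI[of _ "{(x,y)}"] exI[of _ y]) (auto simp: pairwise_def)
    then show ?thesis by blast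
  qed
  have "Max ?M \<in> ?M" by (rule Max_in[OF phi_fin ne])
  then obtain S v' where S: "Max ?M = card S" "(x, v') \<in> F" "S \<subseteq> F" "(x, v') \<in> S" "pairwise noncross S"
     "\<forall>(p, q)\<in>S. p \<le> x \<and> q \<le> v'" by blast
  have vy: "v' = y" using func S(2) assms by blast
  have PM: "Phi_a F x = Max ?M" unfolding Phi_a_def by (rule refl)
  have "card S = a x" using PM S(1) phia inU assms by simp
  then show ?thesis using S vy by blast
qed

lemma key:
  assumes "(x, y) \<in> F" "(x', y') \<in> F" "x < x'" "y < y'"
  shows "a x < a x'"
proof -
  obtain S where S: "S \<subseteq> F" "(x, y) \<in> S" "pairwise noncross S" "\<forall>(p, q)\<in>S. p \<le> x \<and> q \<le> y" "card S = a x"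
    using phi_ex[OF assms(1)] by blast
  have fS: "finite S" using S(1) finF finite_subset by blast
  have nin: "(x', y') \<notin> S" using S(4) assms(3) by fastforce
  have pw: "pairwise noncross (insert (x', y') S)"
    unfolding pairwise_insert
  proof (rule conjI[OF allI[OF impI] S(3)])
    fix e assume "e \<in> S \<and> e \<noteq> (x', y')"
    then have "e \<in> S" by blast
    then obtain p q where e: "e = (p, q)" "p \<le> x" "q \<le> y" using S(4) by (cases e) blast
    then have "p < x'" "q < y'" using assms by auto
    then show "noncross (x', y') e \<and> noncross e (x', y')" using e unfolding noncross_def by auto
  qed
  have "card (insert (x', y') S) \<le> a x'"
  proof (rule phi_ge[OF assms(2)])
    show "insert (x', y') S \<subseteq> F" using S(1) assms(2) by blast
    show "(x', y') \<in> insert (x', y') S" by blast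
    show "pairwise noncross (insert (x', y') S)" by (rule pw)
    show "\<forall>(p, q)\<in>insert (x', y') S. p \<le> x' \<and> q \<le> y'"
    proof
      fix e assume "e \<in> insert (x', y') S"
      then show "case e of (p, q) \<Rightarrow> p \<le> x' \<and> q \<le> y'"
      proof
        assume "e \<in> S"
        then obtain p q where e: "e = (p, q)" "p \<le> x" "q \<le> y" using S(4) by (cases e) blast
        then show ?thesis using assms(3,4) e by (simp add: order.strict_implies_order order_trans)
      qed simp
    qed
  qed
  then show ?thesis using fS nin S(5) by simp
qed

lemma crossU:
  assumes "(x, y) \<in> F" "(x', y') \<in> F" "fst x = fst x'" "x < x'"
  shows "y' < y"
proof (rule ccontr)
  assume "\<not> y' < y"
  then have "y = y' \<or> y < y'" by auto
  then show False
  proof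
    assume "y = y'" then show False using injF assms by blast
  next
    assume "y < y'"
    then have lt: "a x < a x'" using key assms by blast
    obtain u s s' where xs: "x = (u, s)" "x' = (u, s')" using assms(3) by (metis prod.collapse)
    have "s < s'" using assms(4) xs by auto
    moreover have "u < n" "1 \<le> s" "s' \<le> r" using inU[OF assms(1)] inU[OF assms(2)] xs unfolding Ubar_def by auto
    ultimately have "a x' \<le> a x" using monoa xs by auto
    then show False using lt by auto
  qed
qed

lemma crossV:
  assumes "(x, y) \<in> F" "(x', y') \<in> F" "fst y = fst y'" "x < x'"
  shows "y' < y"
proof (rule ccontr)
  assume "\<not> y' < y"
  then have "y = y' \<or> y < y'" by auto
  then show False
  proof
    assume "y = y'" then show False using injF assms by blast
  next
    assume "y < y'"
    then have lt: "a x < a x'" using key assms by blast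
    then have lt2: "b y < b y'" using lab assms by metis
    obtain v t t' where ys: "y = (v, t)" "y' = (v, t')" using assms(3) by (metis prod.collapse)
    have "t < t'" using \<open>y < y'\<close> ys by auto
    moreover have "v < n" "1 \<le> t" "t' \<le> r" using inU[OF assms(1)] inU[OF assms(2)] ys unfolding Ubar_def by auto
    ultimately have "b y' \<le> b y" using monob ys by auto
    then show False using lt2 by auto
  qed
qed

lemma card_fst:
  assumes "X \<subseteq> Ubar n r"
  shows "card {q\<in>F. fst q \<in> X} = card X"
proof -
  have "bij_betw fst {q\<in>F. fst q \<in> X} X"
    unfolding bij_betw_def
  proof
    show "inj_on fst {q\<in>F. fst q \<in> X}"
      by (rule inj_onI) (metis (no_types, lifting) func mem_Collect_eq prod.collapse)
    show "fst ` {q\<in>F. fst q \<in> X} = X"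
    proof
      show "X \<subseteq> fst ` {q\<in>F. fst q \<in> X}"
      proof
        fix x assume "x \<in> X"
        then obtain y where "(x, y) \<in> F" using tot1 assms by blast
        then show "x \<in> fst ` {q\<in>F. fst q \<in> X}" using \<open>x \<in> X\<close> by force
      qed
    qed auto
  qed
  then show ?thesis by (rule bij_betw_same_card)
qed

lemma card_snd:
  assumes "X \<subseteq> Ubar n r"
  shows "card {q\<in>F. snd q \<in> X} = card X"
proof -
  have "bij_betw snd {q\<in>F. snd q \<in> X} X"
    unfolding bij_betw_def
  proof
    show "inj_on snd {q\<in>F. snd q \<in> X}"
      by (rule inj_onI) (metis (no_types, lifting) injF mem_Collect_eq prod.collapse)
    show "snd ` {q\<in>F. snd q \<in> X} = X"
    proof
      show "X \<subseteq> snd ` {q\<in>F. snd q \<in> X}"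
      proof
        fix x assume "x \<in> X"
        then obtain y where "(y, x) \<in> F" using tot2 assms by blast
        then show "x \<in> snd ` {q\<in>F. snd q \<in> X}" using \<open>x \<in> X\<close> by force
      qed
    qed auto
  qed
  then show ?thesis by (rule bij_betw_same_card)
qed

end


context cfg begin

definition GG :: "nat \<Rightarrow> nat \<Rightarrow> nat" where
  "GG u v = card {q\<in>F. fst (fst q) = u \<and> fst (snd q) = v}"

lemma ordU:
  assumes "q \<in> F" "p \<in> F" "fst (fst q) = fst (fst p)"
  shows "fst q < fst p \<longleftrightarrow> snd p < snd q"
proof
  assume "fst q < fst p" then show "snd p < snd q"
    using crossU[of "fst q" "snd q" "fst p" "snd p"] assms by auto
next
  assume a: "snd p < snd q"
  show "fst q < fst p"
  proof (rule ccontr)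
    assume "\<not> fst q < fst p"
    then have "fst q = fst p \<or> fst p < fst q" by auto
    then show False
    proof
      assume "fst q = fst p"
      then have "snd q = snd p" using func[of "fst p" "snd q" "snd p"] assms by (metis prod.collapse)
      then show False using a by auto
    next
      assume "fst p < fst q"
      then have "snd q < snd p" using crossU[of "fst p" "snd p" "fst q" "snd q"] assms by auto
      then show False using a by auto
    qed
  qed
qed

lemma ordV:
  assumes "q \<in> F" "p \<in> F" "fst (snd q) = fst (snd p)"
  shows "fst q < fst p \<longleftrightarrow> snd p < snd q"
proof
  assume "fst q < fst p" then show "snd p < snd q"
    using crossV[of "fst q" "snd q" "fst p" "snd p"] assms by auto
next
  assume a: "snd p < snd q"
  show "fst q < fst p"
  proof (rule ccontr)
    assume "\<not> fst q < fst p"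
    then have "fst q = fst p \<or> fst p < fst q" by auto
    then show False
    proof
      assume "fst q = fst p"
      then have "snd q = snd p" using func[of "fst p" "snd q" "snd p"] assms by (metis prod.collapse)
      then show False using a by auto
    next
      assume "fst p < fst q"
      then have "snd q < snd p" using crossV[of "fst p" "snd p" "fst q" "snd q"] assms by auto
      then show False using a by auto
    qed
  qed
qed

lemma forward:
  assumes pF: "((u, \<sigma>), (v, \<tau>)) \<in> F"
  defines "h \<equiv> card {q\<in>F. fst (fst q) = u \<and> fst (snd q) = v \<and> fst q < (u, \<sigma>)}"
  shows "\<sigma> = (\<Sum>v'\<in>{v<..<n}. GG u v') + (h + 1)"
    and "\<tau> = (\<Sum>u'\<in>{u<..<n}. GG u' v) + GG u v - (h + 1) + 1"
    and "h + 1 \<le> GG u v" and "u < n" and "v < n"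
proof -
  let ?p = "((u, \<sigma>), (v, \<tau>))"
  define c2 where "c2 = card {q\<in>F. fst (fst q) = u \<and> fst (snd q) = v \<and> (u, \<sigma>) < fst q}"
  have bnd: "u < n" "v < n" "1 \<le> \<sigma>" "\<sigma> \<le> r" "1 \<le> \<tau>" "\<tau> \<le> r"
    using inU[OF pF] unfolding Ubar_def by auto
  have fin: "finite {q\<in>F. P q}" for P using finF by auto
  have s1: "card {q\<in>F. fst q \<in> {u} \<times> {1..<\<sigma>}} = \<sigma> - 1"
  proof -
    have "{u} \<times> {1..<\<sigma>} \<subseteq> Ubar n r" using bnd unfolding Ubar_def by auto
    then show ?thesis using card_fst by (simp add: card_cartesian_product)
  qed
  have s2: "{q\<in>F. fst q \<in> {u} \<times> {1..<\<sigma>}} =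
      {q\<in>F. fst (fst q) = u \<and> fst (snd q) \<in> {v<..<n}} \<union> {q\<in>F. fst (fst q) = u \<and> fst (snd q) = v \<and> fst q < (u, \<sigma>)}"
  proof -
    have e: "q \<in> F \<Longrightarrow> fst (fst q) = u \<Longrightarrow> (fst q < (u, \<sigma>) \<longleftrightarrow> (v, \<tau>) < snd q)" for q
      using ordU[of q ?p] pF by auto
    have "{q\<in>F. fst q \<in> {u} \<times> {1..<\<sigma>}} = {q\<in>F. fst (fst q) = u \<and> fst q < (u, \<sigma>)}"
    proof (rule Collect_cong)
      fix q show "(q \<in> F \<and> fst q \<in> {u} \<times> {1..<\<sigma>}) = (q \<in> F \<and> fst (fst q) = u \<and> fst q < (u, \<sigma>))"
        using inU[of "fst q" "snd q"] unfolding Ubar_def by (cases q) auto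
    qed
    also have "\<dots> = {q\<in>F. fst (fst q) = u \<and> (v, \<tau>) < snd q}" using e by blast
    also have "\<dots> = {q\<in>F. fst (fst q) = u \<and> fst (snd q) \<in> {v<..<n}} \<union> {q\<in>F. fst (fst q) = u \<and> fst (snd q) = v \<and> (v, \<tau>) < snd q}"
    proof (rule set_eqI)
      fix q show "q \<in> {q\<in>F. fst (fst q) = u \<and> (v, \<tau>) < snd q} \<longleftrightarrow> q \<in> {q\<in>F. fst (fst q) = u \<and> fst (snd q) \<in> {v<..<n}} \<union> {q\<in>F. fst (fst q) = u \<and> fst (snd q) = v \<and> (v, \<tau>) < snd q}"
        using inU[of "fst q" "snd q"] unfolding Ubar_def by (cases q) auto
    qed
    also have "{q\<in>F. fst (fst q) = u \<and> fst (snd q) = v \<and> (v, \<tau>) < snd q} = {q\<in>F. fst (fst q) = u \<and> fst (snd q) = v \<and> fst q < (u, \<sigma>)}"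
      using e by blast
    finally show ?thesis .
  qed
  have s3: "card {q\<in>F. fst (fst q) = u \<and> fst (snd q) \<in> {v<..<n}} = (\<Sum>v'\<in>{v<..<n}. GG u v')"
  proof -
    have "card {q\<in>{q\<in>F. fst (fst q) = u}. fst (snd q) \<in> {v<..<n}} = (\<Sum>t\<in>{v<..<n}. card {q\<in>{q\<in>F. fst (fst q) = u}. fst (snd q) = t})"
      by (rule card_sum_fibres) (use fin in auto)
    moreover have "{q\<in>{q\<in>F. fst (fst q) = u}. fst (snd q) \<in> {v<..<n}} = {q\<in>F. fst (fst q) = u \<and> fst (snd q) \<in> {v<..<n}}" by auto
    moreover have "\<And>t. card {q\<in>{q\<in>F. fst (fst q) = u}. fst (snd q) = t} = GG u t"
      unfolding GG_def by (rule arg_cong[where f=card]) auto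
    ultimately show ?thesis by simp
  qed
  have s4: "card ({q\<in>F. fst (fst q) = u \<and> fst (snd q) \<in> {v<..<n}} \<union> {q\<in>F. fst (fst q) = u \<and> fst (snd q) = v \<and> fst q < (u, \<sigma>)})
     = card {q\<in>F. fst (fst q) = u \<and> fst (snd q) \<in> {v<..<n}} + h"
    unfolding h_def by (rule card_Un_disjoint) (use fin in auto)
  have sig: "\<sigma> - 1 = (\<Sum>v'\<in>{v<..<n}. GG u v') + h" using s1 s2 s3 s4 by simp
  have t1: "card {q\<in>F. snd q \<in> {v} \<times> {1..<\<tau>}} = \<tau> - 1"
  proof -
    have "{v} \<times> {1..<\<tau>} \<subseteq> Ubar n r" using bnd unfolding Ubar_def by auto
    then show ?thesis using card_snd by (simp add: card_cartesian_product)
  qed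
  have t2: "{q\<in>F. snd q \<in> {v} \<times> {1..<\<tau>}} =
      {q\<in>F. fst (snd q) = v \<and> fst (fst q) \<in> {u<..<n}} \<union> {q\<in>F. fst (fst q) = u \<and> fst (snd q) = v \<and> (u, \<sigma>) < fst q}"
  proof -
    have e: "q \<in> F \<Longrightarrow> fst (snd q) = v \<Longrightarrow> (snd q < (v, \<tau>) \<longleftrightarrow> (u, \<sigma>) < fst q)" for q
      using ordV[of ?p q] pF by auto
    have "{q\<in>F. snd q \<in> {v} \<times> {1..<\<tau>}} = {q\<in>F. fst (snd q) = v \<and> snd q < (v, \<tau>)}"
    proof (rule Collect_cong)
      fix q show "(q \<in> F \<and> snd q \<in> {v} \<times> {1..<\<tau>}) = (q \<in> F \<and> fst (snd q) = v \<and> snd q < (v, \<tau>))"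
        using inU[of "fst q" "snd q"] unfolding Ubar_def by (cases q) auto
    qed
    also have "\<dots> = {q\<in>F. fst (snd q) = v \<and> (u, \<sigma>) < fst q}" using e by blast
    also have "\<dots> = {q\<in>F. fst (snd q) = v \<and> fst (fst q) \<in> {u<..<n}} \<union> {q\<in>F. fst (fst q) = u \<and> fst (snd q) = v \<and> (u, \<sigma>) < fst q}"
    proof (rule set_eqI)
      fix q show "q \<in> {q\<in>F. fst (snd q) = v \<and> (u, \<sigma>) < fst q} \<longleftrightarrow> q \<in> {q\<in>F. fst (snd q) = v \<and> fst (fst q) \<in> {u<..<n}} \<union> {q\<in>F. fst (fst q) = u \<and> fst (snd q) = v \<and> (u, \<sigma>) < fst q}"
        using inU[of "fst q" "snd q"] unfolding Ubar_def by (cases q) auto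
    qed
    finally show ?thesis .
  qed
  have t3: "card {q\<in>F. fst (snd q) = v \<and> fst (fst q) \<in> {u<..<n}} = (\<Sum>u'\<in>{u<..<n}. GG u' v)"
  proof -
    have "card {q\<in>{q\<in>F. fst (snd q) = v}. fst (fst q) \<in> {u<..<n}} = (\<Sum>t\<in>{u<..<n}. card {q\<in>{q\<in>F. fst (snd q) = v}. fst (fst q) = t})"
      by (rule card_sum_fibres) (use fin in auto)
    moreover have "{q\<in>{q\<in>F. fst (snd q) = v}. fst (fst q) \<in> {u<..<n}} = {q\<in>F. fst (snd q) = v \<and> fst (fst q) \<in> {u<..<n}}" by auto
    moreover have "\<And>t. card {q\<in>{q\<in>F. fst (snd q) = v}. fst (fst q) = t} = GG t v"
      unfolding GG_def by (rule arg_cong[where f=card]) auto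
    ultimately show ?thesis by simp
  qed
  have t4: "card ({q\<in>F. fst (snd q) = v \<and> fst (fst q) \<in> {u<..<n}} \<union> {q\<in>F. fst (fst q) = u \<and> fst (snd q) = v \<and> (u, \<sigma>) < fst q})
     = card {q\<in>F. fst (snd q) = v \<and> fst (fst q) \<in> {u<..<n}} + c2"
    unfolding c2_def by (rule card_Un_disjoint) (use fin in auto)
  have tau: "\<tau> - 1 = (\<Sum>u'\<in>{u<..<n}. GG u' v) + c2" using t1 t2 t3 t4 by simp
  have b1: "{q\<in>F. fst (fst q) = u \<and> fst (snd q) = v} =
     insert ?p ({q\<in>F. fst (fst q) = u \<and> fst (snd q) = v \<and> fst q < (u, \<sigma>)} \<union> {q\<in>F. fst (fst q) = u \<and> fst (snd q) = v \<and> (u, \<sigma>) < fst q})"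
  proof (rule set_eqI)
    fix q
    have eqp: "q \<in> F \<Longrightarrow> fst q = (u, \<sigma>) \<Longrightarrow> q = ?p" using func[of "(u,\<sigma>)" "snd q" "(v, \<tau>)"] pF by (cases q) auto
    have tri: "fst q = (u,\<sigma>) \<or> fst q < (u,\<sigma>) \<or> (u,\<sigma>) < fst q" by (meson linorder_neqE)
    show "q \<in> {q\<in>F. fst (fst q) = u \<and> fst (snd q) = v} \<longleftrightarrow> q \<in> insert ?p ({q\<in>F. fst (fst q) = u \<and> fst (snd q) = v \<and> fst q < (u, \<sigma>)} \<union> {q\<in>F. fst (fst q) = u \<and> fst (snd q) = v \<and> (u, \<sigma>) < fst q})"
    proof
      assume "q \<in> {q\<in>F. fst (fst q) = u \<and> fst (snd q) = v}"
      then show "q \<in> insert ?p ({q\<in>F. fst (fst q) = u \<and> fst (snd q) = v \<and> fst q < (u, \<sigma>)} \<union> {q\<in>F. fst (fst q) = u \<and> fst (snd q) = v \<and> (u, \<sigma>) < fst q})"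
        using tri eqp by blast
    qed (use pF in auto)
  qed
  have b2: "GG u v = h + c2 + 1"
  proof -
    have "card ({q\<in>F. fst (fst q) = u \<and> fst (snd q) = v \<and> fst q < (u, \<sigma>)} \<union> {q\<in>F. fst (fst q) = u \<and> fst (snd q) = v \<and> (u, \<sigma>) < fst q}) = h + c2"
      unfolding h_def c2_def by (rule card_Un_disjoint) (use fin in auto)
    moreover have "?p \<notin> ({q\<in>F. fst (fst q) = u \<and> fst (snd q) = v \<and> fst q < (u, \<sigma>)} \<union> {q\<in>F. fst (fst q) = u \<and> fst (snd q) = v \<and> (u, \<sigma>) < fst q})"
      by auto
    moreover have "finite ({q\<in>F. fst (fst q) = u \<and> fst (snd q) = v \<and> fst q < (u, \<sigma>)} \<union> {q\<in>F. fst (fst q) = u \<and> fst (snd q) = v \<and> (u, \<sigma>) < fst q})"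
      using fin by auto
    ultimately show ?thesis unfolding GG_def using b1 by simp
  qed
  show "\<sigma> = (\<Sum>v'\<in>{v<..<n}. GG u v') + (h + 1)" using sig bnd by simp
  show "\<tau> = (\<Sum>u'\<in>{u<..<n}. GG u' v) + GG u v - (h + 1) + 1" using tau bnd b2 by simp
  show "h + 1 \<le> GG u v" using b2 by simp
  show "u < n" "v < n" using bnd by auto
qed

end


lemma lexlt: "fst x < fst y \<Longrightarrow> (x::nat \<times> nat) < y"
  by (cases x, cases y) simp

context cfg begin

lemma F_sub_conf: "F \<subseteq> conf_of n GG"
proof
  fix p assume pF: "p \<in> F"
  obtain u \<sigma> v \<tau> where p: "p = ((u, \<sigma>), (v, \<tau>))" by (metis prod.collapse)
  define h where "h = card {q\<in>F. fst (fst q) = u \<and> fst (snd q) = v \<and> fst q < (u, \<sigma>)}"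
  note fw = forward[OF pF[unfolded p], folded h_def]
  show "p \<in> conf_of n GG" unfolding conf_of_def
    apply (rule CollectI, rule exI[of _ u], rule exI[of _ v], rule exI[of _ "h+1"])
    using fw p by simp
qed

lemma conf_sub_F: "conf_of n GG \<subseteq> F"
proof
  fix p assume "p \<in> conf_of n GG"
  then obtain u v s where p: "p = ((u, (\<Sum>v'\<in>{v<..<n}. GG u v') + s), (v, (\<Sum>u'\<in>{u<..<n}. GG u' v) + GG u v - s + 1))"
    and uv: "u < n" "v < n" "1 \<le> s" "s \<le> GG u v"
    unfolding conf_of_def by blast
  define Bk where "Bk = {q\<in>F. fst (fst q) = u \<and> fst (snd q) = v}"
  define hq :: "(nat \<times> nat) \<times> (nat \<times> nat) \<Rightarrow> nat" where "hq q = card {q'\<in>F. fst (fst q') = u \<and> fst (snd q') = v \<and> fst q' < fst q} + 1" for q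
  have finB: "finite Bk" unfolding Bk_def using finF by auto
  have cB: "card Bk = GG u v" unfolding Bk_def GG_def by simp
  have formB: "q \<in> Bk \<Longrightarrow> q = ((u, snd (fst q)), (v, snd (snd q))) \<and> q \<in> F" for q
    unfolding Bk_def by (cases q) auto
  have lt: "hq q < hq q'" if "q \<in> Bk" "q' \<in> Bk" "fst q < fst q'" for q q'
  proof -
    have "card {q''\<in>F. fst (fst q'') = u \<and> fst (snd q'') = v \<and> fst q'' < fst q} < card {q''\<in>F. fst (fst q'') = u \<and> fst (snd q'') = v \<and> fst q'' < fst q'}"
      by (rule psubset_card_mono) (use finF that Bk_def in auto)
    then show ?thesis unfolding hq_def by simp
  qed
  have inj: "inj_on hq Bk"
  proof (rule inj_onI)
    fix q q' assume a: "q \<in> Bk" "q' \<in> Bk" "hq q = hq q'"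
    have "fst q = fst q'"
    proof (rule ccontr)
      assume "fst q \<noteq> fst q'"
      then have "fst q < fst q' \<or> fst q' < fst q" by (meson linorder_neqE)
      then show False using lt a by fastforce
    qed
    moreover have "q \<in> F" "q' \<in> F" using a formB by auto
    ultimately show "q = q'" using func[of "fst q" "snd q" "snd q'"] by (metis prod.collapse)
  qed
  have sub: "hq ` Bk \<subseteq> {1..GG u v}"
  proof
    fix z assume "z \<in> hq ` Bk"
    then obtain q where q: "q \<in> Bk" "z = hq q" by auto
    have qF: "((u, snd (fst q)), (v, snd (snd q))) \<in> F" using formB[OF q(1)] by metis
    have "hq q = card {q'\<in>F. fst (fst q') = u \<and> fst (snd q') = v \<and> fst q' < (u, snd (fst q))} + 1"
      unfolding hq_def using formB[OF q(1)] by (metis fst_conv)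
    then show "z \<in> {1..GG u v}" using forward(3)[OF qF] q by simp
  qed
  have "hq ` Bk = {1..GG u v}"
    by (rule card_subset_eq) (use sub card_image[OF inj] cB in auto)
  then obtain q where q: "q \<in> Bk" "hq q = s" using uv by (metis atLeastAtMost_iff imageE)
  have qF: "((u, snd (fst q)), (v, snd (snd q))) \<in> F" using formB[OF q(1)] by metis
  have hqe: "hq q = card {q'\<in>F. fst (fst q') = u \<and> fst (snd q') = v \<and> fst q' < (u, snd (fst q))} + 1"
    unfolding hq_def using formB[OF q(1)] by (metis fst_conv)
  have e1: "snd (fst q) = (\<Sum>v'\<in>{v<..<n}. GG u v') + s" using forward(1)[OF qF] hqe q(2) by simp
  have e2: "snd (snd q) = (\<Sum>u'\<in>{u<..<n}. GG u' v) + GG u v - s + 1" using forward(2)[OF qF] hqe q(2) by simp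
  have "p = ((u, snd (fst q)), (v, snd (snd q)))" using p e1 e2 by simp
  then show "p \<in> F" using qF by simp
qed

lemma conf_eq: "conf_of n GG = F" using F_sub_conf conf_sub_F by blast

lemma regular_GG: "regular n r GG"
  unfolding regular_def
proof (intro conjI allI impI)
  fix i assume i: "i < n"
  have "card {q\<in>{q\<in>F. fst (fst q) = i}. fst (snd q) \<in> {..<n}} = (\<Sum>t\<in>{..<n}. card {q\<in>{q\<in>F. fst (fst q) = i}. fst (snd q) = t})"
    by (rule card_sum_fibres) (use finF in auto)
  moreover have "\<And>t. card {q\<in>{q\<in>F. fst (fst q) = i}. fst (snd q) = t} = GG i t"
    unfolding GG_def by (rule arg_cong[where f=card]) auto
  moreover have "{q\<in>{q\<in>F. fst (fst q) = i}. fst (snd q) \<in> {..<n}} = {q\<in>F. fst q \<in> {i} \<times> {1..r}}"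
  proof (rule set_eqI)
    fix q show "q \<in> {q\<in>{q\<in>F. fst (fst q) = i}. fst (snd q) \<in> {..<n}} \<longleftrightarrow> q \<in> {q\<in>F. fst q \<in> {i} \<times> {1..r}}"
      using inU[of "fst q" "snd q"] unfolding Ubar_def by (cases q) auto
  qed
  moreover have "card {q\<in>F. fst q \<in> {i} \<times> {1..r}} = r"
  proof -
    have "{i} \<times> {1..r} \<subseteq> Ubar n r" using i unfolding Ubar_def by auto
    then show ?thesis using card_fst[of "{i} \<times> {1..r}"] by (simp add: card_cartesian_product)
  qed
  ultimately show "(\<Sum>j<n. GG i j) = r" by simp
next
  fix j assume j: "j < n"
  have "card {q\<in>{q\<in>F. fst (snd q) = j}. fst (fst q) \<in> {..<n}} = (\<Sum>t\<in>{..<n}. card {q\<in>{q\<in>F. fst (snd q) = j}. fst (fst q) = t})"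
    by (rule card_sum_fibres) (use finF in auto)
  moreover have "\<And>t. card {q\<in>{q\<in>F. fst (snd q) = j}. fst (fst q) = t} = GG t j"
    unfolding GG_def by (rule arg_cong[where f=card]) auto
  moreover have "{q\<in>{q\<in>F. fst (snd q) = j}. fst (fst q) \<in> {..<n}} = {q\<in>F. snd q \<in> {j} \<times> {1..r}}"
  proof (rule set_eqI)
    fix q show "q \<in> {q\<in>{q\<in>F. fst (snd q) = j}. fst (fst q) \<in> {..<n}} \<longleftrightarrow> q \<in> {q\<in>F. snd q \<in> {j} \<times> {1..r}}"
      using inU[of "fst q" "snd q"] unfolding Ubar_def by (cases q) auto
  qed
  moreover have "card {q\<in>F. snd q \<in> {j} \<times> {1..r}} = r"
  proof -
    have "{j} \<times> {1..r} \<subseteq> Ubar n r" using j unfolding Ubar_def by auto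
    then show ?thesis using card_snd[of "{j} \<times> {1..r}"] by (simp add: card_cartesian_product)
  qed
  ultimately show "(\<Sum>i<n. GG i j) = r" by simp
qed

lemma multi_GG: "is_multigraph n GG"
  unfolding is_multigraph_def
proof (intro allI impI)
  fix i j assume "GG i j \<noteq> 0"
  then have "{q\<in>F. fst (fst q) = i \<and> fst (snd q) = j} \<noteq> {}" unfolding GG_def by (metis card.empty)
  then obtain q where "q \<in> F" "fst (fst q) = i" "fst (snd q) = j" by blast
  then show "i < n \<and> j < n" using inU[of "fst q" "snd q"] unfolding Ubar_def by auto
qed

lemma pm_bound:
  assumes "planar_matching n GG M"
  shows "card M \<le> d"
proof (cases "M = {}")
  case True then show ?thesis by simp
next
  case False
  have Msub: "M \<subseteq> {(i, j). i < n \<and> j < n \<and> GG i j > 0}" and pw: "pairwise noncross M"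
    using assms unfolding planar_matching_def by auto
  have finM: "finite M"
    by (rule finite_subset[OF Msub], rule finite_subset[of _ "{..<n} \<times> {..<n}"]) auto
  have ex: "\<exists>q. q \<in> F \<and> fst (fst q) = fst e \<and> fst (snd q) = snd e" if "e \<in> M" for e
  proof -
    have "GG (fst e) (snd e) > 0" using Msub that by auto
    then have "{q\<in>F. fst (fst q) = fst e \<and> fst (snd q) = snd e} \<noteq> {}" unfolding GG_def by (metis card.empty less_irrefl)
    then show ?thesis by blast
  qed
  define f where "f e = (SOME q. q \<in> F \<and> fst (fst q) = fst e \<and> fst (snd q) = snd e)" for e
  have fP: "f e \<in> F \<and> fst (fst (f e)) = fst e \<and> fst (snd (f e)) = snd e" if "e \<in> M" for e
    unfolding f_def by (rule someI_ex[OF ex[OF that]])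
  have injf: "inj_on f M"
  proof (rule inj_onI)
    fix e e' assume "e \<in> M" "e' \<in> M" "f e = f e'"
    then show "e = e'" using fP[of e] fP[of e'] by (simp add: prod_eq_iff)
  qed
  define u0 where "u0 = Max (fst ` M)"
  have "u0 \<in> fst ` M" unfolding u0_def using finM False by auto
  then obtain e0 where e0: "e0 \<in> M" "fst e0 = u0" by auto
  have below: "fst e < fst e0 \<and> snd e < snd e0" if "e \<in> M" "e \<noteq> e0" for e
  proof -
    have "fst e \<le> u0" unfolding u0_def using finM that by auto
    moreover have "noncross e e0" using pw that e0 unfolding pairwise_def by auto
    ultimately show ?thesis using e0 unfolding noncross_def by auto
  qed
  let ?S = "f ` M"
  have "card ?S \<le> a (fst (f e0))"
  proof (rule phi_ge)
    show "(fst (f e0), snd (f e0)) \<in> F" using fP[OF e0(1)] by simp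
    show "?S \<subseteq> F" using fP by auto
    show "(fst (f e0), snd (f e0)) \<in> ?S" using e0 by simp
    show "pairwise noncross ?S"
      unfolding pairwise_def
    proof (intro ballI impI)
      fix x y assume "x \<in> ?S" "y \<in> ?S" "x \<noteq> y"
      then obtain e e' where ee: "e \<in> M" "e' \<in> M" "x = f e" "y = f e'" "e \<noteq> e'" by auto
      then have "noncross e e'" using pw unfolding pairwise_def by auto
      have fx: "fst (fst x) = fst e" "fst (snd x) = snd e" "fst (fst y) = fst e'" "fst (snd y) = snd e'"
        using ee fP[OF ee(1)] fP[OF ee(2)] by auto
      from \<open>noncross e e'\<close> show "noncross x y"
        unfolding noncross_def
      proof
        assume "fst e < fst e' \<and> snd e < snd e'"
        then have "fst (fst x) < fst (fst y)" "fst (snd x) < fst (snd y)" using fx by auto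
        then show "fst x < fst y \<and> snd x < snd y \<or> fst y < fst x \<and> snd y < snd x" using lexlt by blast
      next
        assume "fst e' < fst e \<and> snd e' < snd e"
        then have "fst (fst y) < fst (fst x)" "fst (snd y) < fst (snd x)" using fx by auto
        then show "fst x < fst y \<and> snd x < snd y \<or> fst y < fst x \<and> snd y < snd x" using lexlt by blast
      qed
    qed
    show "\<forall>(p, q)\<in>?S. p \<le> fst (f e0) \<and> q \<le> snd (f e0)"
    proof
      fix z assume "z \<in> ?S"
      then obtain e where e: "e \<in> M" "z = f e" by auto
      show "case z of (p, q) \<Rightarrow> p \<le> fst (f e0) \<and> q \<le> snd (f e0)"
      proof (cases "e = e0")
        case True then show ?thesis using e by (cases z) auto
      next
        case False
        then have "fst e < fst e0 \<and> snd e < snd e0" using below e by auto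
        then have "fst (fst z) < fst (fst (f e0))" "fst (snd z) < fst (snd (f e0))" using fP[OF e(1)] fP[OF e0(1)] e
          by auto
        then have "fst z < fst (f e0) \<and> snd z < snd (f e0)" using lexlt by blast
        then show ?thesis by (cases z) auto
      qed
    qed
  qed
  moreover have "card ?S = card M" using card_image[OF injf] .
  moreover have "a (fst (f e0)) \<le> d" using arange inU[of "fst (f e0)" "snd (f e0)"] fP[OF e0(1)] by simp
  ultimately show ?thesis by simp
qed

lemma Lmax_GG: "Lmax n GG \<le> d"
proof -
  have fin: "finite {card M | M. planar_matching n GG M}"
  proof (rule finite_subset[of _ "{..n*n}"])
    show "{card M | M. planar_matching n GG M} \<subseteq> {..n*n}"
    proof
      fix z assume "z \<in> {card M | M. planar_matching n GG M}"
      then obtain M where M: "z = card M" "planar_matching n GG M" by auto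
      then have "M \<subseteq> {..<n} \<times> {..<n}" unfolding planar_matching_def by auto
      then have "card M \<le> card ({..<n} \<times> {..<n})" by (intro card_mono) auto
      then show "z \<in> {..n*n}" using M by (simp add: card_cartesian_product)
    qed
  qed simp
  have "planar_matching n GG {}" unfolding planar_matching_def by simp
  then have ne: "{card M | M. planar_matching n GG M} \<noteq> {}" by blast
  have all: "\<forall>z\<in>{card M | M. planar_matching n GG M}. z \<le> d"
  proof
    fix z assume "z \<in> {card M | M. planar_matching n GG M}"
    then obtain M where "z = card M" "planar_matching n GG M" by blast
    then show "z \<le> d" using pm_bound by simp
  qed
  show ?thesis unfolding Lmax_def using Max_le_iff[OF fin ne] all by blast
qed

lemma result: "F \<in> Gbar_set n r d"
  unfolding Gbar_set_def
proof (rule image_eqI[of _ _ GG])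
  show "F = conf_of n GG" using conf_eq by simp
  show "GG \<in> Gr n r d" unfolding Gr_def using multi_GG regular_GG Lmax_GG by simp
qed

end


lemma smallest_all: "finite A \<Longrightarrow> smallest (card A) A = A"
  unfolding smallest_def
  by (auto intro!: psubset_card_mono)

lemma chain_mono:
  fixes f :: "nat \<Rightarrow> nat"
  assumes "\<forall>s. 1 \<le> s \<and> s < r \<longrightarrow> f (s + 1) \<le> f s" "1 \<le> s" "s \<le> s'" "s' \<le> r"
  shows "f s' \<le> f s"
  using assms(3,4)
proof (induction s' rule: dec_induct)
  case base then show ?case by simp
next
  case (step m)
  then have "f (m + 1) \<le> f m" using assms(1,2) by auto
  then show ?case using step by simp
qed

theorem lemma9:
  fixes n r d :: nat and a b :: "nat \<times> nat \<Rightarrow> nat"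
  assumes "1 \<le> n" and "1 \<le> r" and "1 \<le> d"
    and "(a, b) \<in> Wp n r d"
    and "\<forall>x\<in>Ubar n r. Phi_a (phi n r d a b) x = a x"
    and "\<forall>y\<in>Ubar n r. Phi_b (phi n r d a b) y = b y"
  shows "phi n r d a b \<in> Gbar_set n r d"
proof -
  define A where "A k = {x\<in>Ubar n r. a x = k}" for k
  define B where "B k = {y\<in>Ubar n r. b y = k}" for k
  have W: "\<forall>x\<in>Ubar n r. a x \<in> {1..d}" "\<forall>y\<in>Ubar n r. b y \<in> {1..d}"
     "\<forall>k\<in>{1..d}. card (A k) = card (B k)"
     "\<forall>i<n. \<forall>s. 1 \<le> s \<and> s < r \<longrightarrow> a (i, s) \<ge> a (i, s + 1)"
     "\<forall>i<n. \<forall>s. 1 \<le> s \<and> s < r \<longrightarrow> b (i, s) \<ge> b (i, s + 1)"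
    using assms(4) unfolding Wp_def A_def B_def by auto
  have finU: "finite (Ubar n r)" unfolding Ubar_def by auto
  have finA: "finite (A k)" "finite (B k)" for k unfolding A_def B_def using finU by auto
  have phieq: "phi n r d a b = (\<Union>k\<in>{1..d}. cross_connect (A k) (B k))"
    unfolding phi_def Let_def A_def[symmetric] B_def[symmetric]
  proof (rule SUP_cong[OF refl])
    fix k assume "k \<in> {1..d}"
    then have "card (A k) = card (B k)" using W(3) by auto
    then show "(if card (B k) \<le> card (A k) then cross_connect (smallest (card (B k)) (A k)) (B k)
          else cross_connect (A k) (largest (card (A k)) (B k))) = cross_connect (A k) (B k)"
      using smallest_all[OF finA(1), of k] by simp
  qed
  define rk where "rk k x = card {x'\<in>A k. x' < x}" for k x
  define rk' where "rk' k y = card {y'\<in>B k. y < y'}" for k y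
  have mem: "(x, y) \<in> phi n r d a b \<longleftrightarrow> (\<exists>k\<in>{1..d}. x \<in> A k \<and> y \<in> B k \<and> rk k x = rk' k y)" for x y
    unfolding phieq cross_connect_def rk_def rk'_def by auto
  have bA: "bij_betw (rk k) (A k) {0..<card (A k)}" for k unfolding rk_def by (rule rank_bij[OF finA(1)])
  have bB: "bij_betw (rk' k) (B k) {0..<card (B k)}" for k unfolding rk'_def by (rule rank_bij'[OF finA(2)])
  have inA: "inj_on (rk k) (A k)" for k using bA bij_betw_imp_inj_on by blast
  have inB: "inj_on (rk' k) (B k)" for k using bB bij_betw_imp_inj_on by blast
  have imA: "rk k ` A k = {0..<card (A k)}" for k using bA bij_betw_imp_surj_on by blast
  have imB: "rk' k ` B k = {0..<card (B k)}" for k using bB bij_betw_imp_surj_on by blast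
  have AA: "x \<in> A k \<longleftrightarrow> x \<in> Ubar n r \<and> a x = k" for x k unfolding A_def by simp
  have BB: "y \<in> B k \<longleftrightarrow> y \<in> Ubar n r \<and> b y = k" for y k unfolding B_def by simp
  interpret cfg n r d a b "phi n r d a b"
  proof
    show "phi n r d a b \<subseteq> Ubar n r \<times> Ubar n r" using mem AA BB by auto
  next
    fix x y y' assume h: "(x, y) \<in> phi n r d a b" "(x, y') \<in> phi n r d a b"
    then obtain k k' where k: "x \<in> A k" "y \<in> B k" "rk k x = rk' k y" "x \<in> A k'" "y' \<in> B k'" "rk k' x = rk' k' y'"
      using mem by meson
    have "k = k'" using k AA by auto
    then show "y = y'" using k inB[of k] unfolding inj_on_def by metis
  next
    fix x x' y assume h: "(x, y) \<in> phi n r d a b" "(x', y) \<in> phi n r d a b"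
    then obtain k k' where k: "x \<in> A k" "y \<in> B k" "rk k x = rk' k y" "x' \<in> A k'" "y \<in> B k'" "rk k' x' = rk' k' y"
      using mem by meson
    have "k = k'" using k BB by auto
    then show "x = x'" using k inA[of k] unfolding inj_on_def by metis
  next
    fix x assume x: "x \<in> Ubar n r"
    define k where "k = a x"
    have k: "k \<in> {1..d}" "x \<in> A k" using W(1) x AA k_def by auto
    then have "rk k x \<in> rk' k ` B k" using imA imB W(3) by (metis imageI)
    then obtain y where "y \<in> B k" "rk' k y = rk k x" by auto
    then show "\<exists>y. (x, y) \<in> phi n r d a b" using mem k by metis
  next
    fix y assume y: "y \<in> Ubar n r"
    define k where "k = b y"
    have k: "k \<in> {1..d}" "y \<in> B k" using W(2) y BB k_def by auto
    then have "rk' k y \<in> rk k ` A k" using imA imB W(3) by (metis imageI)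
    then obtain x where "x \<in> A k" "rk k x = rk' k y" by auto
    then show "\<exists>x. (x, y) \<in> phi n r d a b" using mem k by metis
  next
    fix x y assume "(x, y) \<in> phi n r d a b"
    then show "a x = b y" using mem AA BB by auto
  next
    fix i s s' assume "i < n" "1 \<le> s" "s \<le> s'" "s' \<le> r"
    then show "a (i, s') \<le> a (i, s)" using chain_mono[of r "\<lambda>t. a (i, t)" s s'] W(4) by auto
  next
    fix i s s' assume "i < n" "1 \<le> s" "s \<le> s'" "s' \<le> r"
    then show "b (i, s') \<le> b (i, s)" using chain_mono[of r "\<lambda>t. b (i, t)" s s'] W(5) by auto
  next
    fix x assume "x \<in> Ubar n r" then show "Phi_a (phi n r d a b) x = a x" using assms(5) by auto
  next
    fix x assume "x \<in> Ubar n r" then show "a x \<le> d" using W(1) by auto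
  qed
  show ?thesis by (rule result)
qed


end
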